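(* Let $w:A\to B$ be a weak equivalence in a P-category $(\mathcal{C},P,\mathcal{F},\mathcal{W})$. Then the induced map $\overline{w}:=((\delta^0_A,\delta^1_A),P(w)):P(A)\to\mathcal{P}(w,w)$ is a weak equivalence.
   Context: Let $\mathcal{C}$ have finite products and a final object $e$. A functorial path is a functor $P$ with natural transformations $\iota:1\to P$, $\delta^0,\delta^1:P\to1$, $\delta^0\iota=\delta^1\iota=1$, equipped with a symmetry $\tau$ (natural automorphism of $P$, $\tau\tau=1$, $\tau\iota=\iota$, $\delta^k\tau=\delta^{1-k}$), a coproduct $c:P\to P^2$ ($c_{P(A)}c_A=P(c_A)c_A$, $\delta^1_{P(A)}c_A=P(\delta^1_A)c_A=1$, $c_A\iota_A=\iota_{P(A)}\iota_A$, $\delta^0_{P(A)}c_A=P(\delta^0_A)c_A=\iota_A\delta^0_A$), an interchange $\mu$ (natural automorphism of $P^2$, $\delta^k_{P(A)}\mu_A=P(\delta^k_A)$, $P(\delta^k_A)\mu_A=\delta^k_{P(A)}$) and a folding map $\nabla:P^2\to P$ ($\delta^k\nabla=\delta^k\delta^k_P$, $\nabla\iota_P=1$). The double mapping path $\mathcal{P}(w,w)$ is the fibre product of $w\times w:A\times A\to B\times B$ and $(\delta^0_B,\delta^1_B):P(B)\to B\times B$. A P-category has classes $\mathcal{F}$ (fibrations), $\mathcal{W}$ (weak equivalences) satisfying: (P$_1$) both contain isomorphisms and are closed under composition, $\mathcal{W}$ is 2-out-of-3, each $A\to e$ is a fibration; (P$_2$) $\iota_A\in\mathcal{W}$, $(\delta^0_A,\delta^1_A)\in\mathcal{F}$,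 $\delta^0_A,\delta^1_A\in\mathcal{F}\cap\mathcal{W}$; (P$_3$) for $u:A\to C$ and $v:B\to C$ in $\mathcal{F}$, $A\times_CB$ exists, $\pi_1\in\mathcal{F}$, $\pi_1\in\mathcal{F}\cap\mathcal{W}$ if $v$ is, and $\pi_2\in\mathcal{W}$ if $u\in\mathcal{W}$; (P$_4$) $P$ preserves fibrations, weak equivalences and fibre products; (P$_5$) for each fibration $v:A\to B$, $((\delta^0_A,\delta^1_A),P(v)):P(A)\to\mathcal{P}(v,v)$ is a fibration. *)

theory Defs imports Main begin

record ('o,'m) cat =
  cobj  :: "'o set"
  carr  :: "'m set"
  cdom  :: "'m \<Rightarrow> 'o"
  ccod  :: "'m \<Rightarrow> 'o"
  cid   :: "'o \<Rightarrow> 'm"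
  ccomp :: "'m \<Rightarrow> 'm \<Rightarrow> 'm"   \<comment> \<open>ccomp C g f = g after f\<close>
  cterm :: "'o"
  cprod :: "'o \<Rightarrow> 'o \<Rightarrow> 'o"
  cpr1  :: "'o \<Rightarrow> 'o \<Rightarrow> 'm"
  cpr2  :: "'o \<Rightarrow> 'o \<Rightarrow> 'm"

definition hom :: "('o,'m,'x) cat_scheme \<Rightarrow> 'o \<Rightarrow> 'o \<Rightarrow> 'm set" where
  "hom C A B = {f \<in> carr C. cdom C f = A \<and> ccod C f = B}"

definition is_category :: "('o,'m,'x) cat_scheme \<Rightarrow> bool" where
  "is_category C \<longleftrightarrow>
     (\<forall>f\<in>carr C. cdom C f \<in> cobj C \<and> ccod C f \<in> cobj C) \<and>
     (\<forall>A\<in>cobj C. cid C A \<in> hom C A A) \<and>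
     (\<forall>f\<in>carr C. \<forall>g\<in>carr C. ccod C f = cdom C g \<longrightarrow>
        ccomp C g f \<in> hom C (cdom C f) (ccod C g)) \<and>
     (\<forall>f\<in>carr C. ccomp C (cid C (ccod C f)) f = f \<and> ccomp C f (cid C (cdom C f)) = f) \<and>
     (\<forall>f\<in>carr C. \<forall>g\<in>carr C. \<forall>h\<in>carr C. ccod C f = cdom C g \<longrightarrow> ccod C g = cdom C h \<longrightarrow>
        ccomp C h (ccomp C g f) = ccomp C (ccomp C h g) f)"

definition is_iso :: "('o,'m,'x) cat_scheme \<Rightarrow> 'm \<Rightarrow> bool" where
  "is_iso C f \<longleftrightarrow> f \<in> carr C \<and>
     (\<exists>g\<in>hom C (ccod C f) (cdom C f).
        ccomp C g f = cid C (cdom C f) \<and> ccomp C f g = cid C (ccod C f))"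

definition is_terminal :: "('o,'m,'x) cat_scheme \<Rightarrow> 'o \<Rightarrow> bool" where
  "is_terminal C e \<longleftrightarrow> e \<in> cobj C \<and> (\<forall>A\<in>cobj C. \<exists>!t. t \<in> hom C A e)"

definition is_product :: "('o,'m,'x) cat_scheme \<Rightarrow> 'o \<Rightarrow> 'o \<Rightarrow> 'o \<Rightarrow> 'm \<Rightarrow> 'm \<Rightarrow> bool" where
  "is_product C A B X p1 p2 \<longleftrightarrow> X \<in> cobj C \<and> p1 \<in> hom C X A \<and> p2 \<in> hom C X B \<and>
     (\<forall>Y\<in>cobj C. \<forall>f\<in>hom C Y A. \<forall>g\<in>hom C Y B.
        \<exists>!h. h \<in> hom C Y X \<and> ccomp C p1 h = f \<and> ccomp C p2 h = g)"

definition is_pullback :: "('o,'m,'x) cat_scheme \<Rightarrow> 'm \<Rightarrow> 'm \<Rightarrow> 'o \<Rightarrow> 'm \<Rightarrow> 'm \<Rightarrow> bool" where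
  "is_pullback C u v X p1 p2 \<longleftrightarrow> u \<in> carr C \<and> v \<in> carr C \<and> ccod C u = ccod C v \<and>
     X \<in> cobj C \<and> p1 \<in> hom C X (cdom C u) \<and> p2 \<in> hom C X (cdom C v) \<and>
     ccomp C u p1 = ccomp C v p2 \<and>
     (\<forall>Y\<in>cobj C. \<forall>f\<in>hom C Y (cdom C u). \<forall>g\<in>hom C Y (cdom C v).
        ccomp C u f = ccomp C v g \<longrightarrow>
        (\<exists>!h. h \<in> hom C Y X \<and> ccomp C p1 h = f \<and> ccomp C p2 h = g))"

definition is_cat_fp :: "('o,'m,'x) cat_scheme \<Rightarrow> bool" where
  "is_cat_fp C \<longleftrightarrow> is_category C \<and> is_terminal C (cterm C) \<and>
     (\<forall>A\<in>cobj C. \<forall>B\<in>cobj C. is_product C A B (cprod C A B) (cpr1 C A B) (cpr2 C A B))"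

definition tuple :: "('o,'m,'x) cat_scheme \<Rightarrow> 'm \<Rightarrow> 'm \<Rightarrow> 'm" where
  "tuple C f g = (THE h. h \<in> hom C (cdom C f) (cprod C (ccod C f) (ccod C g)) \<and>
      ccomp C (cpr1 C (ccod C f) (ccod C g)) h = f \<and>
      ccomp C (cpr2 C (ccod C f) (ccod C g)) h = g)"

definition parr :: "('o,'m,'x) cat_scheme \<Rightarrow> 'm \<Rightarrow> 'm \<Rightarrow> 'm" where
  "parr C f g = tuple C (ccomp C f (cpr1 C (cdom C f) (cdom C g)))
                        (ccomp C g (cpr2 C (cdom C f) (cdom C g)))"

record ('o,'m) path_str =
  PO    :: "'o \<Rightarrow> 'o"
  PA    :: "'m \<Rightarrow> 'm"
  iota  :: "'o \<Rightarrow> 'm"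
  dl0   :: "'o \<Rightarrow> 'm"
  dl1   :: "'o \<Rightarrow> 'm"
  tau   :: "'o \<Rightarrow> 'm"
  cop   :: "'o \<Rightarrow> 'm"
  mu    :: "'o \<Rightarrow> 'm"
  nab   :: "'o \<Rightarrow> 'm"

definition is_functor_endo :: "('o,'m,'x) cat_scheme \<Rightarrow> ('o \<Rightarrow> 'o) \<Rightarrow> ('m \<Rightarrow> 'm) \<Rightarrow> bool" where
  "is_functor_endo C FO FA \<longleftrightarrow>
     (\<forall>A\<in>cobj C. FO A \<in> cobj C) \<and>
     (\<forall>f\<in>carr C. FA f \<in> hom C (FO (cdom C f)) (FO (ccod C f))) \<and>
     (\<forall>A\<in>cobj C. FA (cid C A) = cid C (FO A)) \<and>
     (\<forall>f\<in>carr C. \<forall>g\<in>carr C. ccod C f = cdom C g \<longrightarrow>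
        FA (ccomp C g f) = ccomp C (FA g) (FA f))"

definition is_nat_trans ::
  "('o,'m,'x) cat_scheme \<Rightarrow> ('o \<Rightarrow> 'o) \<Rightarrow> ('m \<Rightarrow> 'm) \<Rightarrow> ('o \<Rightarrow> 'o) \<Rightarrow> ('m \<Rightarrow> 'm) \<Rightarrow> ('o \<Rightarrow> 'm) \<Rightarrow> bool" where
  "is_nat_trans C FO FA GO GA t \<longleftrightarrow>
     (\<forall>A\<in>cobj C. t A \<in> hom C (FO A) (GO A)) \<and>
     (\<forall>f\<in>carr C. ccomp C (GA f) (t (cdom C f)) = ccomp C (t (ccod C f)) (FA f))"

definition functorial_path :: "('o,'m,'x) cat_scheme \<Rightarrow> ('o,'m,'y) path_str_scheme \<Rightarrow> bool" where
  "functorial_path C P \<longleftrightarrow>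
     (let P0 = PO P; P1 = PA P; I0 = (\<lambda>A. A); I1 = (\<lambda>f. f);
          PP0 = (\<lambda>A. P0 (P0 A)); PP1 = (\<lambda>f. P1 (P1 f));
          cmp = ccomp C in
     is_functor_endo C P0 P1 \<and>
     is_nat_trans C I0 I1 P0 P1 (iota P) \<and>
     is_nat_trans C P0 P1 I0 I1 (dl0 P) \<and>
     is_nat_trans C P0 P1 I0 I1 (dl1 P) \<and>
     is_nat_trans C P0 P1 P0 P1 (tau P) \<and>
     is_nat_trans C P0 P1 PP0 PP1 (cop P) \<and>
     is_nat_trans C PP0 PP1 PP0 PP1 (mu P) \<and>
     is_nat_trans C PP0 PP1 P0 P1 (nab P) \<and>
     (\<forall>A\<in>cobj C.
        \<comment> \<open>path axioms\<close>
        cmp (dl0 P A) (iota P A) = cid C A \<and>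
        cmp (dl1 P A) (iota P A) = cid C A \<and>
        \<comment> \<open>symmetry\<close>
        is_iso C (tau P A) \<and>
        cmp (tau P A) (tau P A) = cid C (P0 A) \<and>
        cmp (tau P A) (iota P A) = iota P A \<and>
        cmp (dl0 P A) (tau P A) = dl1 P A \<and>
        cmp (dl1 P A) (tau P A) = dl0 P A \<and>
        \<comment> \<open>coproduct\<close>
        cmp (cop P (P0 A)) (cop P A) = cmp (P1 (cop P A)) (cop P A) \<and>
        cmp (dl1 P (P0 A)) (cop P A) = cid C (P0 A) \<and>
        cmp (P1 (dl1 P A)) (cop P A) = cid C (P0 A) \<and>
        cmp (cop P A) (iota P A) = cmp (iota P (P0 A)) (iota P A) \<and>
        cmp (dl0 P (P0 A)) (cop P A) = cmp (iota P A) (dl0 P A) \<and>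
        cmp (P1 (dl0 P A)) (cop P A) = cmp (iota P A) (dl0 P A) \<and>
        \<comment> \<open>interchange\<close>
        is_iso C (mu P A) \<and>
        cmp (dl0 P (P0 A)) (mu P A) = P1 (dl0 P A) \<and>
        cmp (dl1 P (P0 A)) (mu P A) = P1 (dl1 P A) \<and>
        cmp (P1 (dl0 P A)) (mu P A) = dl0 P (P0 A) \<and>
        cmp (P1 (dl1 P A)) (mu P A) = dl1 P (P0 A) \<and>
        \<comment> \<open>folding map\<close>
        cmp (dl0 P A) (nab P A) = cmp (dl0 P A) (dl0 P (P0 A)) \<and>
        cmp (dl1 P A) (nab P A) = cmp (dl1 P A) (dl1 P (P0 A)) \<and>
        cmp (nab P A) (iota P (P0 A)) = cid C (P0 A)))"

definition dd :: "('o,'m,'x) cat_scheme \<Rightarrow> ('o,'m,'y) path_str_scheme \<Rightarrow> 'o \<Rightarrow> 'm" where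
  "dd C P A = tuple C (dl0 P A) (dl1 P A)"

text \<open>Q with q1 : Q \<rightarrow> A \<times> A, q2 : Q \<rightarrow> P(B) is a double mapping path P(w,w),
  i.e. a fibre product of w \<times> w and (\<delta>^0_B,\<delta>^1_B).\<close>
definition is_dmp :: "('o,'m,'x) cat_scheme \<Rightarrow> ('o,'m,'y) path_str_scheme \<Rightarrow> 'm \<Rightarrow> 'o \<Rightarrow> 'm \<Rightarrow> 'm \<Rightarrow> bool" where
  "is_dmp C P w Q q1 q2 \<longleftrightarrow> is_pullback C (parr C w w) (dd C P (ccod C w)) Q q1 q2"

definition is_induced_dmp_map ::
  "('o,'m,'x) cat_scheme \<Rightarrow> ('o,'m,'y) path_str_scheme \<Rightarrow> 'm \<Rightarrow> 'o \<Rightarrow> 'm \<Rightarrow> 'm \<Rightarrow> 'm \<Rightarrow> bool" where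
  "is_induced_dmp_map C P w Q q1 q2 h \<longleftrightarrow>
     h \<in> hom C (PO P (cdom C w)) Q \<and>
     ccomp C q1 h = dd C P (cdom C w) \<and> ccomp C q2 h = PA P w"

definition P_category ::
  "('o,'m,'x) cat_scheme \<Rightarrow> ('o,'m,'y) path_str_scheme \<Rightarrow> 'm set \<Rightarrow> 'm set \<Rightarrow> bool" where
  "P_category C P Fib W \<longleftrightarrow>
     is_cat_fp C \<and> functorial_path C P \<and> Fib \<subseteq> carr C \<and> W \<subseteq> carr C \<and>
     \<comment> \<open>(P1)\<close>
     (\<forall>f. is_iso C f \<longrightarrow> f \<in> Fib \<and> f \<in> W) \<and>
     (\<forall>f\<in>Fib. \<forall>g\<in>Fib. ccod C f = cdom C g \<longrightarrow> ccomp C g f \<in> Fib) \<and>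
     (\<forall>f\<in>W. \<forall>g\<in>W. ccod C f = cdom C g \<longrightarrow> ccomp C g f \<in> W) \<and>
     (\<forall>f\<in>carr C. \<forall>g\<in>carr C. ccod C f = cdom C g \<longrightarrow>
        (f \<in> W \<and> ccomp C g f \<in> W \<longrightarrow> g \<in> W) \<and>
        (g \<in> W \<and> ccomp C g f \<in> W \<longrightarrow> f \<in> W)) \<and>
     (\<forall>A\<in>cobj C. \<forall>t\<in>hom C A (cterm C). t \<in> Fib) \<and>
     \<comment> \<open>(P2)\<close>
     (\<forall>A\<in>cobj C. iota P A \<in> W \<and> dd C P A \<in> Fib \<and>
        dl0 P A \<in> Fib \<and> dl0 P A \<in> W \<and> dl1 P A \<in> Fib \<and> dl1 P A \<in> W) \<and>
     \<comment> \<open>(P3): fibre products along fibrations v\<close>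
     (\<forall>u\<in>carr C. \<forall>v\<in>Fib. ccod C u = ccod C v \<longrightarrow>
        (\<exists>X p1 p2. is_pullback C u v X p1 p2) \<and>
        (\<forall>X p1 p2. is_pullback C u v X p1 p2 \<longrightarrow>
           p1 \<in> Fib \<and> (v \<in> W \<longrightarrow> p1 \<in> W) \<and> (u \<in> W \<longrightarrow> p2 \<in> W))) \<and>
     \<comment> \<open>(P4)\<close>
     (\<forall>f\<in>Fib. PA P f \<in> Fib) \<and> (\<forall>f\<in>W. PA P f \<in> W) \<and>
     (\<forall>u\<in>carr C. \<forall>v\<in>Fib. \<forall>X p1 p2. is_pullback C u v X p1 p2 \<longrightarrow>
        is_pullback C (PA P u) (PA P v) (PO P X) (PA P p1) (PA P p2)) \<and>
     \<comment> \<open>(P5)\<close>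
     (\<forall>v\<in>Fib. \<forall>Q q1 q2 h. is_dmp C P v Q q1 q2 \<longrightarrow>
        is_induced_dmp_map C P v Q q1 q2 h \<longrightarrow> h \<in> Fib)"

end

theory Submission imports Defs begin

lemma cat_comp:
  assumes "is_category C" "f \<in> hom C X Y" "g \<in> hom C Y Z"
  shows "ccomp C g f \<in> hom C X Z"
  using assms unfolding is_category_def hom_def by auto

lemma cat_assoc:
  assumes "is_category C" "f \<in> hom C X Y" "g \<in> hom C Y Z" "k \<in> hom C Z U"
  shows "ccomp C k (ccomp C g f) = ccomp C (ccomp C k g) f"
  using assms unfolding is_category_def hom_def by auto

lemma hom_obj:
  assumes "is_category C" "f \<in> hom C X Y"
  shows "X \<in> cobj C" "Y \<in> cobj C" "f \<in> carr C" "cdom C f = X" "ccod C f = Y"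
  using assms unfolding is_category_def hom_def by auto

lemma prod_parts0:
  assumes "is_product C A B X p1 p2"
  shows "X \<in> cobj C \<and> p1 \<in> hom C X A \<and> p2 \<in> hom C X B \<and>
    (\<forall>Y\<in>cobj C. \<forall>f\<in>hom C Y A. \<forall>g\<in>hom C Y B.
        \<exists>!h. h \<in> hom C Y X \<and> ccomp C p1 h = f \<and> ccomp C p2 h = g)"
  using assms unfolding is_product_def .

lemmas prod_parts = prod_parts0[THEN conjunct1] prod_parts0[THEN conjunct2, THEN conjunct1]
  prod_parts0[THEN conjunct2, THEN conjunct2, THEN conjunct1]
  prod_parts0[THEN conjunct2, THEN conjunct2, THEN conjunct2]

lemma prod_unique:
  assumes "is_category C" "is_product C A B X p1 p2"
    "h \<in> hom C Y X" "h' \<in> hom C Y X"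
    "ccomp C p1 h = ccomp C p1 h'" "ccomp C p2 h = ccomp C p2 h'"
  shows "h = h'"
proof -
  have Y: "Y \<in> cobj C" using hom_obj(1)[OF assms(1,3)] .
  note p = prod_parts(2,3)[OF assms(2)]
  note U = prod_parts(4)[OF assms(2)]
  have "\<exists>!k. k \<in> hom C Y X \<and> ccomp C p1 k = ccomp C p1 h \<and> ccomp C p2 k = ccomp C p2 h"
    using U[rule_format, OF Y cat_comp[OF assms(1) assms(3) p(1)] cat_comp[OF assms(1) assms(3) p(2)]] .
  then obtain k where k: "\<forall>y. y \<in> hom C Y X \<and> ccomp C p1 y = ccomp C p1 h \<and> ccomp C p2 y = ccomp C p2 h \<longrightarrow> y = k"
    by (elim ex1E) blast
  have "h = k" using k assms(3) by blast
  moreover have "h' = k" using k assms(4,5,6) by simp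
  ultimately show ?thesis by simp
qed

lemma prod_exists:
  assumes "is_product C A B X p1 p2" "Y \<in> cobj C" "f \<in> hom C Y A" "g \<in> hom C Y B"
  shows "\<exists>h. h \<in> hom C Y X \<and> ccomp C p1 h = f \<and> ccomp C p2 h = g"
  using ex1_implies_ex[OF prod_parts(4)[OF assms(1), rule_format, OF assms(2-4)]] .

lemma prod_sym: assumes "is_product C A B X p1 p2" shows "is_product C B A X p2 p1"
proof -
  note P = prod_parts[OF assms]
  have "\<forall>Y\<in>cobj C. \<forall>g\<in>hom C Y B. \<forall>f\<in>hom C Y A.
        \<exists>!h. h \<in> hom C Y X \<and> ccomp C p2 h = g \<and> ccomp C p1 h = f"
  proof (intro ballI)
    fix Y g f assume "Y \<in> cobj C" "g \<in> hom C Y B" "f \<in> hom C Y A"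
    from P(4)[rule_format, OF this(1,3,2)]
    show "\<exists>!h. h \<in> hom C Y X \<and> ccomp C p2 h = g \<and> ccomp C p1 h = f"
      by (simp only: conj_commute conj_left_commute)
  qed
  then show ?thesis unfolding is_product_def using P(1-3) by (intro conjI)
qed

lemma pullbackI:
  assumes "u \<in> carr C" "v \<in> carr C" "ccod C u = ccod C v"
     "X \<in> cobj C" "p1 \<in> hom C X (cdom C u)" "p2 \<in> hom C X (cdom C v)"
     "ccomp C u p1 = ccomp C v p2"
     "\<And>Y f g. Y\<in>cobj C \<Longrightarrow> f\<in>hom C Y (cdom C u) \<Longrightarrow> g\<in>hom C Y (cdom C v) \<Longrightarrow>
        ccomp C u f = ccomp C v g \<Longrightarrow>
        (\<exists>!h. h \<in> hom C Y X \<and> ccomp C p1 h = f \<and> ccomp C p2 h = g)"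
  shows "is_pullback C u v X p1 p2"
  unfolding is_pullback_def using assms(1-7) by (intro conjI ballI impI assms(8))

lemma pullback_parts0:
  assumes "is_pullback C u v X p1 p2"
  shows "u \<in> carr C \<and> v \<in> carr C \<and> ccod C u = ccod C v \<and>
     X \<in> cobj C \<and> p1 \<in> hom C X (cdom C u) \<and> p2 \<in> hom C X (cdom C v) \<and>
     ccomp C u p1 = ccomp C v p2"
  using assms unfolding is_pullback_def by (elim conjE) (intro conjI)

lemma prod_pullback_term:
  assumes "is_category C" "is_terminal C e" "is_product C X Y Z p1 p2"
    "tX \<in> hom C X e" "tY \<in> hom C Y e"
  shows "is_pullback C tX tY Z p1 p2"
proof -
  note p = prod_parts(1-3)[OF assms(3)]
  have c1: "ccomp C tX p1 \<in> hom C Z e" using cat_comp[OF assms(1) p(2) assms(4)] .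
  have c2: "ccomp C tY p2 \<in> hom C Z e" using cat_comp[OF assms(1) p(3) assms(5)] .
  have "\<exists>!t. t \<in> hom C Z e" using assms(2) p(1) unfolding is_terminal_def by blast
  then have eq: "ccomp C tX p1 = ccomp C tY p2" using c1 c2 by (elim ex1E) blast
  note X = hom_obj[OF assms(1) assms(4)] and Y = hom_obj[OF assms(1) assms(5)]
  show ?thesis
    apply (rule pullbackI)
    using X Y p eq apply simp_all
    using prod_parts(4)[OF assms(3)] by blast
qed

lemma prod_pullback_w:
  assumes "is_category C" "w \<in> hom C A B"
    "is_product C A Z Z1 a1 z1" "is_product C B Z Z2 b1 z2"
    "m \<in> hom C Z1 Z2" "ccomp C b1 m = ccomp C w a1" "ccomp C z2 m = z1"
  shows "is_pullback C w b1 Z1 a1 m"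
proof -
  note cat = assms(1)
  note P1 = prod_parts(1-3)[OF assms(3)]
  note P2 = prod_parts(1-3)[OF assms(4)]
  have W: "w \<in> carr C" "cdom C w = A" "ccod C w = B" using hom_obj[OF cat assms(2)] by auto
  have B1: "b1 \<in> carr C" "cdom C b1 = Z2" "ccod C b1 = B" using hom_obj[OF cat P2(2)] by auto
  have univ: "\<exists>!h. h \<in> hom C Y Z1 \<and> ccomp C a1 h = f \<and> ccomp C m h = g"
    if Y: "Y \<in> cobj C" and f: "f \<in> hom C Y A" and g: "g \<in> hom C Y Z2"
      and fg: "ccomp C w f = ccomp C b1 g" for Y f g
  proof -
    have k: "ccomp C z2 g \<in> hom C Y Z" using cat_comp[OF cat g P2(3)] .
    obtain h where h: "h \<in> hom C Y Z1" "ccomp C a1 h = f" "ccomp C z1 h = ccomp C z2 g"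
      using prod_exists[OF assms(3) Y f k] by blast
    have mh: "ccomp C m h \<in> hom C Y Z2" using cat_comp[OF cat h(1) assms(5)] .
    have e1: "ccomp C b1 (ccomp C m h) = ccomp C b1 g"
      using cat_assoc[OF cat h(1) assms(5) P2(2)] cat_assoc[OF cat h(1) P1(2) assms(2)] assms(6) h(2) fg
      by simp
    have e2: "ccomp C z2 (ccomp C m h) = ccomp C z2 g"
      using cat_assoc[OF cat h(1) assms(5) P2(3)] assms(7) h(3) by simp
    have mhg: "ccomp C m h = g" using prod_unique[OF cat assms(4) mh g e1 e2] .
    show ?thesis
    proof (rule ex1I[of _ h])
      show "h \<in> hom C Y Z1 \<and> ccomp C a1 h = f \<and> ccomp C m h = g" using h mhg by simp
    next
      fix h' assume h': "h' \<in> hom C Y Z1 \<and> ccomp C a1 h' = f \<and> ccomp C m h' = g"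
      have "ccomp C z1 h' = ccomp C z2 g"
        using cat_assoc[OF cat _ assms(5) P2(3), of h' Y] h' assms(7) by simp
      then show "h' = h" using prod_unique[OF cat assms(3), of h' Y h] h h' by simp
    qed
  qed
  show ?thesis
    apply (rule pullbackI)
    using W B1 P1 assms(5,6) apply simp_all
    using univ by simp
qed

lemma tuple_prop:
  assumes "is_cat_fp C" "f \<in> hom C Y B1" "g \<in> hom C Y B2"
  shows "tuple C f g \<in> hom C Y (cprod C B1 B2) \<and>
         ccomp C (cpr1 C B1 B2) (tuple C f g) = f \<and> ccomp C (cpr2 C B1 B2) (tuple C f g) = g"
proof -
  have cat: "is_category C" using assms(1) unfolding is_cat_fp_def by (elim conjE)
  note F = hom_obj[OF cat assms(2)] and G = hom_obj[OF cat assms(3)]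
  have pr: "is_product C B1 B2 (cprod C B1 B2) (cpr1 C B1 B2) (cpr2 C B1 B2)"
    using assms(1) F(2) G(2) unfolding is_cat_fp_def by (elim conjE) blast
  have ex: "\<exists>!h. h \<in> hom C Y (cprod C B1 B2) \<and> ccomp C (cpr1 C B1 B2) h = f \<and> ccomp C (cpr2 C B1 B2) h = g"
    using prod_parts(4)[OF pr, rule_format, OF F(1) assms(2,3)] .
  show ?thesis unfolding tuple_def F(4,5) G(5) using theI'[OF ex] .
qed

lemma PC_cat: "P_category C P Fib W \<Longrightarrow> is_cat_fp C"
  unfolding P_category_def by (elim conjE) assumption
lemma PC_catc: "P_category C P Fib W \<Longrightarrow> is_category C"
  by (drule PC_cat) (simp add: is_cat_fp_def)
lemma PC_W: "P_category C P Fib W \<Longrightarrow> W \<subseteq> carr C"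
  unfolding P_category_def by (elim conjE) assumption
lemma PC_Wcomp0: "P_category C P Fib W \<Longrightarrow> (\<forall>f\<in>W. \<forall>g\<in>W. ccod C f = cdom C g \<longrightarrow> ccomp C g f \<in> W)"
  unfolding P_category_def by (elim conjE) assumption
lemma PC_Wcomp: "P_category C P Fib W \<Longrightarrow> f \<in> W \<Longrightarrow> g \<in> W \<Longrightarrow> ccod C f = cdom C g \<Longrightarrow> ccomp C g f \<in> W"
  using PC_Wcomp0 by blast
lemma PC_2of30: "P_category C P Fib W \<Longrightarrow> (\<forall>f\<in>carr C. \<forall>g\<in>carr C. ccod C f = cdom C g \<longrightarrow>
        (f \<in> W \<and> ccomp C g f \<in> W \<longrightarrow> g \<in> W) \<and>
        (g \<in> W \<and> ccomp C g f \<in> W \<longrightarrow> f \<in> W))"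
  unfolding P_category_def by (elim conjE) assumption
lemma PC_2of3: "P_category C P Fib W \<Longrightarrow> f \<in> carr C \<Longrightarrow> g \<in> carr C \<Longrightarrow> ccod C f = cdom C g \<Longrightarrow>
   g \<in> W \<Longrightarrow> ccomp C g f \<in> W \<Longrightarrow> f \<in> W"
  using PC_2of30 by blast
lemma PC_term0: "P_category C P Fib W \<Longrightarrow> (\<forall>A\<in>cobj C. \<forall>t\<in>hom C A (cterm C). t \<in> Fib)"
  unfolding P_category_def by (elim conjE) assumption
lemma PC_term: "P_category C P Fib W \<Longrightarrow> A \<in> cobj C \<Longrightarrow> t \<in> hom C A (cterm C) \<Longrightarrow> t \<in> Fib"
  using PC_term0 by blast
lemma PC_dd0: "P_category C P Fib W \<Longrightarrow> (\<forall>A\<in>cobj C. iota P A \<in> W \<and> dd C P A \<in> Fib \<and>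
        dl0 P A \<in> Fib \<and> dl0 P A \<in> W \<and> dl1 P A \<in> Fib \<and> dl1 P A \<in> W)"
  unfolding P_category_def by (elim conjE) assumption
lemma PC_dd: "P_category C P Fib W \<Longrightarrow> A \<in> cobj C \<Longrightarrow> dd C P A \<in> Fib"
  using PC_dd0 by blast
lemma PC_PW0: "P_category C P Fib W \<Longrightarrow> (\<forall>f\<in>W. PA P f \<in> W)"
  unfolding P_category_def by (elim conjE) assumption
lemma PC_PW: "P_category C P Fib W \<Longrightarrow> f \<in> W \<Longrightarrow> PA P f \<in> W"
  using PC_PW0 by blast
lemma PC_P30: "P_category C P Fib W \<Longrightarrow> (\<forall>u\<in>carr C. \<forall>v\<in>Fib. ccod C u = ccod C v \<longrightarrow>
        (\<exists>X p1 p2. is_pullback C u v X p1 p2) \<and>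
        (\<forall>X p1 p2. is_pullback C u v X p1 p2 \<longrightarrow>
           p1 \<in> Fib \<and> (v \<in> W \<longrightarrow> p1 \<in> W) \<and> (u \<in> W \<longrightarrow> p2 \<in> W)))"
  unfolding P_category_def by (elim conjE) assumption
lemma PC_P3: "P_category C P Fib W \<Longrightarrow> u \<in> carr C \<Longrightarrow> v \<in> Fib \<Longrightarrow> ccod C u = ccod C v \<Longrightarrow>
   is_pullback C u v X p1 p2 \<Longrightarrow> p1 \<in> Fib \<and> (v \<in> W \<longrightarrow> p1 \<in> W) \<and> (u \<in> W \<longrightarrow> p2 \<in> W)"
  using PC_P30[of C P Fib W] by blast

lemma fib_proj:
  assumes "P_category C P Fib W" "is_product C X Y Z p1 p2"
  shows "p1 \<in> Fib"
proof -
  have cat: "is_category C" using PC_catc[OF assms(1)] .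
  have trm: "is_terminal C (cterm C)"
    using PC_cat[OF assms(1)] unfolding is_cat_fp_def by blast
  note pp = prod_parts(1-3)[OF assms(2)]
  have XY: "X \<in> cobj C" "Y \<in> cobj C" "Z \<in> cobj C"
    using hom_obj(2)[OF cat pp(2)] hom_obj(2)[OF cat pp(3)] pp(1) by auto
  have "\<exists>!t. t \<in> hom C X (cterm C)" using trm XY(1) unfolding is_terminal_def by blast
  then obtain tX where tX: "tX \<in> hom C X (cterm C)" by (elim ex1E)
  have "\<exists>!t. t \<in> hom C Y (cterm C)" using trm XY(2) unfolding is_terminal_def by blast
  then obtain tY where tY: "tY \<in> hom C Y (cterm C)" by (elim ex1E)
  have pb: "is_pullback C tX tY Z p1 p2" using prod_pullback_term[OF cat trm assms(2) tX tY] .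
  have tYF: "tY \<in> Fib" using PC_term[OF assms(1)] XY tY by blast
  have "tX \<in> carr C" "ccod C tX = ccod C tY" using hom_obj[OF cat tX] hom_obj[OF cat tY] by auto
  then show ?thesis using PC_P3[OF assms(1) _ tYF _ pb] by blast
qed

theorem lemma2p18:
  assumes "P_category C P Fib W"
    and "w \<in> W"
    and "is_dmp C P w Q q1 q2"
    and "is_induced_dmp_map C P w Q q1 q2 h"
  shows "h \<in> W"
proof -
  note PC = assms(1)
  have fp: "is_cat_fp C" and cat: "is_category C" and WC: "W \<subseteq> carr C"
    using PC_cat[OF PC] PC_catc[OF PC] PC_W[OF PC] by auto
  define A where "A = cdom C w"
  define B where "B = ccod C w"
  have wc: "w \<in> carr C" using assms(2) WC by blast
  have wh: "w \<in> hom C A B" using wc unfolding A_def B_def hom_def by simp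
  have AB: "A \<in> cobj C" "B \<in> cobj C" using hom_obj[OF cat wh] by auto
  have prod: "\<And>X Y. X \<in> cobj C \<Longrightarrow> Y \<in> cobj C \<Longrightarrow>
      is_product C X Y (cprod C X Y) (cpr1 C X Y) (cpr2 C X Y)"
    using fp unfolding is_cat_fp_def by (elim conjE) blast
  have pAA: "is_product C A A (cprod C A A) (cpr1 C A A) (cpr2 C A A)" using prod AB by blast
  have pBA: "is_product C B A (cprod C B A) (cpr1 C B A) (cpr2 C B A)" using prod AB by blast
  have pBB: "is_product C B B (cprod C B B) (cpr1 C B B) (cpr2 C B B)" using prod AB by blast
  note hAA = prod_parts(1-3)[OF pAA] and hBA = prod_parts(1-3)[OF pBA]
    and hBB = prod_parts(1-3)[OF pBB]
  have wp1: "ccomp C w (cpr1 C A A) \<in> hom C (cprod C A A) B"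
    using cat_comp[OF cat _ wh] hAA by blast
  obtain m1 where m1: "m1 \<in> hom C (cprod C A A) (cprod C B A)"
    "ccomp C (cpr1 C B A) m1 = ccomp C w (cpr1 C A A)" "ccomp C (cpr2 C B A) m1 = cpr2 C A A"
    using prod_exists[OF pBA _ wp1, of "cpr2 C A A"] hAA by blast
  have pb1: "is_pullback C w (cpr1 C B A) (cprod C A A) (cpr1 C A A) m1"
    using prod_pullback_w[OF cat wh pAA pBA m1(1)] m1 by simp
  have f1: "cpr1 C B A \<in> Fib" using fib_proj[OF PC pBA] .
  have "ccod C w = ccod C (cpr1 C B A)" using hBA hom_obj[OF cat] B_def by metis
  then have m1W: "m1 \<in> W" using PC_P3[OF PC wc f1 _ pb1] assms(2) by blast
  have wp2: "ccomp C w (cpr2 C B A) \<in> hom C (cprod C B A) B"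
    using cat_comp[OF cat _ wh] hBA by blast
  obtain m2 where m2: "m2 \<in> hom C (cprod C B A) (cprod C B B)"
    "ccomp C (cpr1 C B B) m2 = cpr1 C B A" "ccomp C (cpr2 C B B) m2 = ccomp C w (cpr2 C B A)"
    using prod_exists[OF pBB _ _ wp2, of "cpr1 C B A"] hBA by blast
  have pb2: "is_pullback C w (cpr2 C B B) (cprod C B A) (cpr2 C B A) m2"
    using prod_pullback_w[OF cat wh prod_sym[OF pBA] prod_sym[OF pBB] m2(1)] m2 by simp
  have f2: "cpr2 C B B \<in> Fib" using fib_proj[OF PC prod_sym[OF pBB]] .
  have "ccod C w = ccod C (cpr2 C B B)" using hBB hom_obj[OF cat] B_def by metis
  then have m2W: "m2 \<in> W" using PC_P3[OF PC wc f2 _ pb2] assms(2) by blast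
  have mm: "ccomp C m2 m1 \<in> hom C (cprod C A A) (cprod C B B)" using cat_comp[OF cat m1(1) m2(1)] .
  have mmW: "ccomp C m2 m1 \<in> W"
    using PC_Wcomp[OF PC m1W m2W] hom_obj[OF cat m1(1)] hom_obj[OF cat m2(1)] by simp
  have wq1: "ccomp C w (cpr1 C A A) \<in> hom C (cprod C A A) B" using wp1 .
  have wq2: "ccomp C w (cpr2 C A A) \<in> hom C (cprod C A A) B"
    using cat_comp[OF cat _ wh] hAA by blast
  have pw: "parr C w w = tuple C (ccomp C w (cpr1 C A A)) (ccomp C w (cpr2 C A A))"
    unfolding parr_def A_def by simp
  note T = tuple_prop[OF fp wq1 wq2]
  have e1: "ccomp C (cpr1 C B B) (ccomp C m2 m1) = ccomp C w (cpr1 C A A)"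
    using cat_assoc[OF cat m1(1) m2(1), of "cpr1 C B B" B] hBB m1 m2 by simp
  have e2: "ccomp C (cpr2 C B B) (ccomp C m2 m1) = ccomp C w (cpr2 C A A)"
    using cat_assoc[OF cat m1(1) m2(1), of "cpr2 C B B" B] hBB m1 m2
      cat_assoc[OF cat m1(1) _ wh, of "cpr2 C B A"] hBA hAA by simp
  have "parr C w w = ccomp C m2 m1"
    using prod_unique[OF cat pBB, of "parr C w w" "cprod C A A" "ccomp C m2 m1"] T pw mm e1 e2
    by simp
  then have uW: "parr C w w \<in> W" using mmW by simp
  have pb: "is_pullback C (parr C w w) (dd C P B) Q q1 q2" using assms(3) unfolding is_dmp_def B_def .
  have ddF: "dd C P B \<in> Fib" using PC_dd[OF PC] AB by blast
  have uc1: "parr C w w \<in> carr C" using pullback_parts0[OF pb] by blast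
  have uc2: "ccod C (parr C w w) = ccod C (dd C P B)" using pullback_parts0[OF pb] by blast
  note uc = uc1 uc2
  have q2W: "q2 \<in> W" using PC_P3[OF PC uc(1) ddF uc(2) pb] uW by blast
  have PwW: "PA P w \<in> W" using PC_PW[OF PC assms(2)] .
  have hh: "h \<in> hom C (PO P A) Q" "ccomp C q2 h = PA P w"
    using assms(4) unfolding is_induced_dmp_map_def A_def by auto
  have q2h: "q2 \<in> hom C Q (cdom C (dd C P B))" using pullback_parts0[OF pb] by simp
  show ?thesis
    using PC_2of3[OF PC _ _ _ q2W, of h] hom_obj[OF cat hh(1)] hom_obj[OF cat q2h] hh(2) PwW
    by simp
qed

end
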